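(* Let $Y$ be a normed vector space and $A$ a nonempty closed convex subset of $Y$ such that $\operatorname{bar}(A)\neq\{0\}$ (equivalently $A\neq Y$). Then $A$ is weak-admissible at each of its points and is determined by the set $$C=\{y^*-\inf_{x\in A}y^*(x):\ y^*\in S_{Y^*}\cap(-\operatorname{bar}(A))\}.$$ Moreover, $A$ is admissible at each of its points, determined by $C$, whenever $0\notin\overline{\operatorname{conv}}^{w^*}(S_{Y^*}\cap(-\operatorname{bar}(A)))$. Consequently: (i) every closed convex set $A$ with $A\neq Y$ and $\operatorname{int}(\mathcal{R}_A)\neq\emptyset$ is admissible at each of its points, determined by $C$; (ii) in particular, every closed convex cone $A$ of $Y$ with $A\neq Y$ and $\operatorname{int}(A)\neq\emptyset$ is admissible at each of its points, determined by $S_{Y^*}\cap A^*$.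
   Context: $Y^*$ is the dual of $Y$ with the weak-star topology, $S_{Y^*}$ its unit sphere, $\overline{\operatorname{conv}}^{w^*}$ the $w^*$-closed convex hull. $\operatorname{bar}(A):=\{y^*\in Y^*:\sup_{y\in A}y^*(y)<+\infty\}$ (barrier cone); $\mathcal{R}_A:=\{v\in Y:x+\lambda v\in A\ \forall\lambda>0,\forall x\in A\}$ (recession cone); $A^*:=\{y^*\in Y^*:y^*(y)\ge0\ \forall y\in A\}$. Elements $y^*-c$ of $C$ are the functions $y\mapsto y^*(y)-c$. For a family $C$ of functions $\phi:Y\to\mathbb{R}$, $[C]^\times:=\{y:\phi(y)\ge0\ \forall\phi\in C\}$. $C$ is equi-Gateaux differentiable at $y$ if each $\phi$ is Gateaux differentiable at $y$ (differential $d_G\phi(y)\in Y^*$, defined via one-sided limits $t\searrow0$) and for each $v$, $\lim_{t\searrow0}\sup_{\phi\in C}|(\phi(y+tv)-\phi(y)-t\langle d_G\phi(y),v\rangle)/t|=0$; equi-lower semicontinuous at $y$ if for every $\varepsilon>0$ some open neighbourhood $O$ of $y$ satisfies $\phi(z)-\phi(y)>-\varepsilon$ for all $z\in O,\phi\in C$; $r$-equi-Lipschitz at $y$ if all $\phi\in C$ are $r$-Lipschitz on a common ball centered at $y$. $A$ is weak-admissible at $\hat y\in A$, determined by a nonempty family $C$, if: (a) $A=[C]^\times$; (b) $C$ is equi-Gateaux differentiable at $\hat y$; (c) $\{\phi\in C:\phi(\hat y)\ne0\}$ is empty or equi-lower semicontinuous at $\hat y$; (d) $\overline{\operatorname{conv}}^{w^*}\{d_G\phi(\hat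 y):\phi\in C\}$ is $w^*$-compact. $A$ is admissible at $\hat y\in A$, determined by a nonempty family $C$, if: (a) $A=[C]^\times$; (b) $C$ is equi-Gateaux differentiable and $r$-equi-Lipschitz at $\hat y$ for some $r\ge0$; (c) $0\notin\overline{\operatorname{conv}}^{w^*}\{d_G\phi(\hat y):\phi\in C\}$. *)

theory Defs
  imports "HOL-Analysis.Analysis"
begin

text \<open>The dual space Y* is the type of bounded linear functionals 'a \<Rightarrow>L real;
  its weak-star topology is the topology of pointwise convergence, i.e. the pullback
  of the product (pointwise) topology on 'a \<Rightarrow> real along blinfun_apply.\<close>

definition wstar_topology :: "('a::real_normed_vector \<Rightarrow>\<^sub>L real) topology" where
  "wstar_topology = pullback_topology UNIV blinfun_apply euclidean"

definition wstar_cch :: "('a::real_normed_vector \<Rightarrow>\<^sub>L real) set \<Rightarrow> ('a \<Rightarrow>\<^sub>L real) set" where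
  "wstar_cch S = wstar_topology closure_of (convex hull S)"

definition dual_sphere :: "('a::real_normed_vector \<Rightarrow>\<^sub>L real) set" where
  "dual_sphere = {f. norm f = 1}"

definition bar :: "'a::real_normed_vector set \<Rightarrow> ('a \<Rightarrow>\<^sub>L real) set" where
  "bar A = {f. bdd_above (blinfun_apply f ` A)}"

definition rec_cone :: "'a::real_normed_vector set \<Rightarrow> 'a set" where
  "rec_cone A = {v. \<forall>l>0. \<forall>x\<in>A. x + l *\<^sub>R v \<in> A}"

definition dual_cone :: "'a::real_normed_vector set \<Rightarrow> ('a \<Rightarrow>\<^sub>L real) set" where
  "dual_cone A = {f. \<forall>y\<in>A. blinfun_apply f y \<ge> 0}"

definition nonneg_set :: "('a \<Rightarrow> real) set \<Rightarrow> 'a set" where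
  "nonneg_set C = {y. \<forall>\<phi>\<in>C. \<phi> y \<ge> 0}"

definition gateaux_diff :: "('a::real_normed_vector \<Rightarrow> real) \<Rightarrow> 'a \<Rightarrow> ('a \<Rightarrow>\<^sub>L real) \<Rightarrow> bool" where
  "gateaux_diff \<phi> y L \<longleftrightarrow>
     (\<forall>v. ((\<lambda>t. (\<phi> (y + t *\<^sub>R v) - \<phi> y) / t) \<longlongrightarrow> blinfun_apply L v) (at_right 0))"

text \<open>equi-Gateaux differentiability of C at y, with D giving the Gateaux differentials;
  the limit of the supremum being 0 is written out as: for every eps > 0, eventually
  for t \<searrow> 0 every quotient is at most eps.\<close>
definition equi_gateaux :: "('a::real_normed_vector \<Rightarrow> real) set \<Rightarrow> 'a \<Rightarrow> (('a \<Rightarrow> real) \<Rightarrow> ('a \<Rightarrow>\<^sub>L real)) \<Rightarrow> bool" where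
  "equi_gateaux C y D \<longleftrightarrow>
     (\<forall>\<phi>\<in>C. gateaux_diff \<phi> y (D \<phi>)) \<and>
     (\<forall>v. \<forall>\<epsilon>>0. eventually (\<lambda>t. \<forall>\<phi>\<in>C.
          \<bar>(\<phi> (y + t *\<^sub>R v) - \<phi> y - t * blinfun_apply (D \<phi>) v) / t\<bar> \<le> \<epsilon>) (at_right 0))"

definition equi_lsc :: "('a::real_normed_vector \<Rightarrow> real) set \<Rightarrow> 'a \<Rightarrow> bool" where
  "equi_lsc C y \<longleftrightarrow>
     (\<forall>\<epsilon>>0. \<exists>U. open U \<and> y \<in> U \<and> (\<forall>z\<in>U. \<forall>\<phi>\<in>C. \<phi> z - \<phi> y > - \<epsilon>))"

definition equi_lipschitz :: "real \<Rightarrow> ('a::real_normed_vector \<Rightarrow> real) set \<Rightarrow> 'a \<Rightarrow> bool" where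
  "equi_lipschitz r C y \<longleftrightarrow>
     (\<exists>\<delta>>0. \<forall>\<phi>\<in>C. \<forall>x\<in>ball y \<delta>. \<forall>z\<in>ball y \<delta>. \<bar>\<phi> x - \<phi> z\<bar> \<le> r * norm (x - z))"

definition weak_admissible :: "'a::real_normed_vector set \<Rightarrow> 'a \<Rightarrow> ('a \<Rightarrow> real) set \<Rightarrow> bool" where
  "weak_admissible A y C \<longleftrightarrow> y \<in> A \<and> C \<noteq> {} \<and>
     A = nonneg_set C \<and>
     (\<exists>D. equi_gateaux C y D \<and>
        ({\<phi>\<in>C. \<phi> y \<noteq> 0} = {} \<or> equi_lsc {\<phi>\<in>C. \<phi> y \<noteq> 0} y) \<and>
        compactin wstar_topology (wstar_cch (D ` C)))"

definition admissible :: "'a::real_normed_vector set \<Rightarrow> 'a \<Rightarrow> ('a \<Rightarrow> real) set \<Rightarrow> bool" where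
  "admissible A y C \<longleftrightarrow> y \<in> A \<and> C \<noteq> {} \<and>
     A = nonneg_set C \<and>
     (\<exists>D. equi_gateaux C y D \<and> (\<exists>r\<ge>0. equi_lipschitz r C y) \<and>
        0 \<notin> wstar_cch (D ` C))"

definition Cfam :: "'a::real_normed_vector set \<Rightarrow> ('a \<Rightarrow> real) set" where
  "Cfam A = {(\<lambda>y. blinfun_apply f y - (INF x\<in>A. blinfun_apply f x)) | f. f \<in> dual_sphere \<inter> uminus ` bar A}"

end

theory Submission
  imports Defs
begin

definition sublin :: "('a::real_vector \<Rightarrow> real) \<Rightarrow> bool" where
  "sublin p \<longleftrightarrow> (\<forall>x y. p (x + y) \<le> p x + p y) \<and> (\<forall>x t. 0 < t \<longrightarrow> p (t *\<^sub>R x) \<le> t * p x)"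

lemma sublin_add: "sublin p \<Longrightarrow> p (x + y) \<le> p x + p y"
  unfolding sublin_def by blast

lemma sublin_hom:
  assumes "sublin p" "t > 0" shows "p (t *\<^sub>R x) = t * p x"
proof -
  have a: "p (t *\<^sub>R x) \<le> t * p x" using assms unfolding sublin_def by blast
  have "p (inverse t *\<^sub>R (t *\<^sub>R x)) \<le> inverse t * p (t *\<^sub>R x)"
    using assms unfolding sublin_def by (meson inverse_positive_iff_positive)
  hence "p x \<le> inverse t * p (t *\<^sub>R x)" using assms by simp
  hence "t * p x \<le> p (t *\<^sub>R x)" using assms by (simp add: field_simps)
  with a show ?thesis by simp
qed

lemma sublin_0: assumes "sublin p" shows "p 0 = 0"
  using sublin_hom[OF assms, of 2 0] by simp

definition fgraph :: "('a \<times> real) set \<Rightarrow> bool" where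
  "fgraph G \<longleftrightarrow> (\<forall>x a b. (x,a) \<in> G \<longrightarrow> (x,b) \<in> G \<longrightarrow> a = b)"

definition domp :: "('a \<Rightarrow> real) \<Rightarrow> ('a \<times> real) set \<Rightarrow> bool" where
  "domp p G \<longleftrightarrow> (\<forall>x a. (x,a) \<in> G \<longrightarrow> a \<le> p x)"

lemma hb_step:
  fixes p :: "'a::real_vector \<Rightarrow> real"
  assumes sl: "sublin p" and sub: "subspace G" and fg: "fgraph G" and dp: "domp p G"
    and x0: "x0 \<notin> fst ` G"
  obtains G' where "subspace G'" "fgraph G'" "domp p G'" "G \<subseteq> G'" "x0 \<in> fst ` G'"
proof -
  define S where "S = {a - p (m - x0) | m a. (m,a) \<in> G}"
  have G0: "(0,0) \<in> G" using sub by (metis subspace_0 zero_prod_def)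
  have Gadd: "(m + m', a + a') \<in> G" if "(m,a) \<in> G" "(m',a') \<in> G" for m m' a a'
    using subspace_add[OF sub that] by simp
  have Gsc: "(c *\<^sub>R m, c * a) \<in> G" if "(m,a) \<in> G" for m a c
    using subspace_scale[OF sub that, of c] by simp
  have Sne: "S \<noteq> {}" using G0 unfolding S_def by blast
  have Sub: "s \<le> p (m' + x0) - a'" if "s \<in> S" "(m',a') \<in> G" for s m' a'
  proof -
    obtain m a where s: "s = a - p (m - x0)" "(m,a) \<in> G" using \<open>s \<in> S\<close> unfolding S_def by blast
    have "a + a' \<le> p (m + m')" using dp Gadd[OF s(2) that(2)] unfolding domp_def by blast
    also have "\<dots> = p ((m - x0) + (m' + x0))" by (simp add: algebra_simps)
    also have "\<dots> \<le> p (m - x0) + p (m' + x0)" by (rule sublin_add[OF sl])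
    finally show ?thesis using s by simp
  qed
  have bdd: "bdd_above S" using Sub G0 unfolding bdd_above_def by blast
  define c where "c = Sup S"
  have c1: "a - p (m - x0) \<le> c" if "(m,a) \<in> G" for m a
    unfolding c_def using that bdd by (intro cSup_upper) (auto simp: S_def)
  have c2: "c \<le> p (m + x0) - a" if "(m,a) \<in> G" for m a
    unfolding c_def using that Sne by (intro cSup_least) (auto intro: Sub)
  define G' where "G' = {(m + t *\<^sub>R x0, a + t * c) | m a t. (m,a) \<in> G}"
  have "subspace G'"
    unfolding subspace_def
  proof (intro conjI ballI allI)
    show "0 \<in> G'" unfolding G'_def using G0 by (auto intro!: exI[of _ 0] simp: zero_prod_def)
  next
    fix x y assume "x \<in> G'" "y \<in> G'"
    then obtain m a t m' a' t' where x: "x = (m + t *\<^sub>R x0, a + t * c)" "(m,a) \<in> G"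
      and y: "y = (m' + t' *\<^sub>R x0, a' + t' * c)" "(m',a') \<in> G"
      unfolding G'_def by blast
    have "x + y = ((m + m') + (t + t') *\<^sub>R x0, (a + a') + (t + t') * c)"
      using x y by (simp add: algebra_simps)
    thus "x + y \<in> G'" unfolding G'_def using Gadd[OF x(2) y(2)] by blast
  next
    fix r x assume "x \<in> G'"
    then obtain m a t where x: "x = (m + t *\<^sub>R x0, a + t * c)" "(m,a) \<in> G"
      unfolding G'_def by blast
    have "r *\<^sub>R x = (r *\<^sub>R m + (r * t) *\<^sub>R x0, r * a + (r * t) * c)"
      using x by (simp add: algebra_simps)
    thus "r *\<^sub>R x \<in> G'" unfolding G'_def using Gsc[OF x(2)] by blast
  qed
  moreover have "fgraph G'"
    unfolding fgraph_def
  proof (intro allI impI)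
    fix x b b'
    assume "(x,b) \<in> G'" "(x,b') \<in> G'"
    then obtain m a t m' a' t' where x: "x = m + t *\<^sub>R x0" "b = a + t * c" "(m,a) \<in> G"
      and y: "x = m' + t' *\<^sub>R x0" "b' = a' + t' * c" "(m',a') \<in> G"
      unfolding G'_def by blast
    have tt: "t = t'"
    proof (rule ccontr)
      assume "t \<noteq> t'"
      have "(m' - m, a' - a) \<in> G" using Gadd[OF y(3) Gsc[OF x(3), of "-1"]] by simp
      hence "(inverse (t - t') *\<^sub>R (m' - m), inverse (t - t') * (a' - a)) \<in> G" by (rule Gsc)
      moreover have "inverse (t - t') *\<^sub>R (m' - m) = x0"
      proof -
        have "m' - m = (t - t') *\<^sub>R x0" using x(1) y(1) by (simp add: algebra_simps)
        thus ?thesis using \<open>t \<noteq> t'\<close> by simp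
      qed
      ultimately have "x0 \<in> fst ` G" by force
      with x0 show False by blast
    qed
    hence "m = m'" using x(1) y(1) by simp
    hence "a = a'" using fg x(3) y(3) unfolding fgraph_def by blast
    thus "b = b'" using x y tt by simp
  qed
  moreover have "domp p G'"
    unfolding domp_def
  proof (intro allI impI)
    fix x b assume "(x,b) \<in> G'"
    then obtain m a t where x: "x = m + t *\<^sub>R x0" "b = a + t * c" "(m,a) \<in> G"
      unfolding G'_def by blast
    consider "t = 0" | "t > 0" | "t < 0" by linarith
    thus "b \<le> p x"
    proof cases
      case 1 thus ?thesis using x dp unfolding domp_def by simp
    next
      case 2
      have "c \<le> p (inverse t *\<^sub>R m + x0) - inverse t * a" using c2[OF Gsc[OF x(3)]] .
      hence "t * c \<le> t * p (inverse t *\<^sub>R m + x0) - a" using 2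
        by (simp add: field_simps)
      also have "t * p (inverse t *\<^sub>R m + x0) = p (t *\<^sub>R (inverse t *\<^sub>R m + x0))"
        using sublin_hom[OF sl 2] by simp
      also have "t *\<^sub>R (inverse t *\<^sub>R m + x0) = x" using 2 x(1) by (simp add: algebra_simps)
      finally show ?thesis using x by simp
    next
      case 3
      define s where "s = - t"
      have s: "s > 0" using 3 s_def by simp
      have "inverse s * a - p (inverse s *\<^sub>R m - x0) \<le> c" using c1[OF Gsc[OF x(3)]] .
      hence "a - s * p (inverse s *\<^sub>R m - x0) \<le> s * c" using s
        by (simp add: field_simps)
      also have "s * p (inverse s *\<^sub>R m - x0) = p (s *\<^sub>R (inverse s *\<^sub>R m - x0))"
        using sublin_hom[OF sl s] by simp
      also have "s *\<^sub>R (inverse s *\<^sub>R m - x0) = x" using s x(1) s_def by (simp add: algebra_simps)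
      finally show ?thesis using x s_def by simp
    qed
  qed
  moreover have "G \<subseteq> G'" unfolding G'_def by (force intro: exI[of _ 0])
  moreover have "x0 \<in> fst ` G'" unfolding G'_def using G0
    by (force intro!: image_eqI[of _ _ "(0 + 1 *\<^sub>R x0, 0 + 1 * c)"])
  ultimately show ?thesis using that by blast
qed

lemma hahn_banach:
  fixes p :: "'a::real_vector \<Rightarrow> real"
  assumes sl: "sublin p"
  obtains F where "linear F" "\<And>x. F x \<le> p x" "F y0 = p y0"
proof -
  define G0 where "G0 = range (\<lambda>t. (t *\<^sub>R y0, t * p y0))"
  define AA where "AA = {G. subspace G \<and> fgraph G \<and> domp p G \<and> G0 \<subseteq> G}"
  have p0: "p 0 = 0" by (rule sublin_0[OF sl])
  have G0A: "G0 \<in> AA"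
    unfolding AA_def
  proof (intro CollectI conjI)
    show "subspace G0" unfolding subspace_def G0_def
    proof (intro conjI ballI allI)
      show "0 \<in> range (\<lambda>t. (t *\<^sub>R y0, t * p y0))"
        by (rule image_eqI[of _ _ 0]) (auto simp: zero_prod_def)
    next
      fix x y assume "x \<in> range (\<lambda>t. (t *\<^sub>R y0, t * p y0))" "y \<in> range (\<lambda>t. (t *\<^sub>R y0, t * p y0))"
      then obtain t t' where "x = (t *\<^sub>R y0, t * p y0)" "y = (t' *\<^sub>R y0, t' * p y0)" by blast
      thus "x + y \<in> range (\<lambda>t. (t *\<^sub>R y0, t * p y0))"
        by (intro image_eqI[of _ _ "t + t'"]) (auto simp: algebra_simps)
    next
      fix c x assume "x \<in> range (\<lambda>t. (t *\<^sub>R y0, t * p y0))"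
      then obtain t where "x = (t *\<^sub>R y0, t * p y0)" by blast
      thus "c *\<^sub>R x \<in> range (\<lambda>t. (t *\<^sub>R y0, t * p y0))"
        by (intro image_eqI[of _ _ "c * t"]) (auto simp: algebra_simps)
    qed
  next
    show "fgraph G0" unfolding fgraph_def G0_def
    proof (intro allI impI)
      fix x a b assume "(x, a) \<in> range (\<lambda>t. (t *\<^sub>R y0, t * p y0))" "(x, b) \<in> range (\<lambda>t. (t *\<^sub>R y0, t * p y0))"
      then obtain t t' where "(x,a) = (t *\<^sub>R y0, t * p y0)" "(x,b) = (t' *\<^sub>R y0, t' * p y0)"
        by blast
      hence tt: "x = t *\<^sub>R y0" "a = t * p y0" "x = t' *\<^sub>R y0" "b = t' * p y0" by simp_all
      show "a = b"
      proof (cases "y0 = 0")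
        case True thus ?thesis using tt p0 by simp
      next
        case False
        have "t *\<^sub>R y0 = t' *\<^sub>R y0" using tt(1)[symmetric] tt(3) by (rule trans)
        hence "t = t' \<or> y0 = 0" using scaleR_cancel_right by blast
        hence "t = t'" using False by blast
        thus ?thesis using tt by simp
      qed
    qed
  next
    show "domp p G0" unfolding domp_def G0_def
    proof (intro allI impI)
      fix x a assume "(x, a) \<in> range (\<lambda>t. (t *\<^sub>R y0, t * p y0))"
      then obtain t where tt: "x = t *\<^sub>R y0" "a = t * p y0" by auto
      consider "t = 0" | "t > 0" | "t < 0" by linarith
      thus "a \<le> p x"
      proof cases
        case 1 thus ?thesis using tt p0 by simp
      next
        case 2 thus ?thesis using tt sublin_hom[OF sl 2] by simp
      next
        case 3
        have "0 \<le> p y0 + p (- y0)" using sublin_add[OF sl, of y0 "- y0"] p0 by simp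
        moreover have "p x = (- t) * p (- y0)" using sublin_hom[OF sl, of "-t" "-y0"] 3 tt by simp
        moreover have "0 \<le> (- t) * (p y0 + p (- y0))" using 3 calculation(1) by (intro mult_nonneg_nonneg) simp_all
        ultimately show ?thesis using tt by (simp add: algebra_simps)
      qed
    qed
  qed auto
  have "\<forall>C\<in>chains AA. \<exists>U\<in>AA. \<forall>X\<in>C. X \<subseteq> U"
  proof
    fix C assume C: "C \<in> chains AA"
    show "\<exists>U\<in>AA. \<forall>X\<in>C. X \<subseteq> U"
    proof (cases "C = {}")
      case True thus ?thesis using G0A by blast
    next
      case False
      have CA: "C \<subseteq> AA" and ch: "\<And>X Y. X \<in> C \<Longrightarrow> Y \<in> C \<Longrightarrow> X \<subseteq> Y \<or> Y \<subseteq> X"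
        using C unfolding chains_def chain_subset_def by blast+
      have "\<Union>C \<in> AA" unfolding AA_def
      proof (intro CollectI conjI)
        show "subspace (\<Union>C)" unfolding subspace_def
        proof (intro conjI ballI allI)
          obtain X where "X \<in> C" using False by blast
          thus "0 \<in> \<Union>C" using CA unfolding AA_def by (auto intro: subspace_0)
        next
          fix x y assume "x \<in> \<Union>C" "y \<in> \<Union>C"
          then obtain X Y where "x \<in> X" "y \<in> Y" "X \<in> C" "Y \<in> C" by blast
          then obtain Z where "x \<in> Z" "y \<in> Z" "Z \<in> C" using ch by blast
          thus "x + y \<in> \<Union>C" using CA unfolding AA_def by (auto intro: subspace_add)
        next
          fix c x assume "x \<in> \<Union>C"
          then obtain X where "x \<in> X" "X \<in> C" by blast
          thus "c *\<^sub>R x \<in> \<Union>C" using CA unfolding AA_def by (auto intro: subspace_scale)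
        qed
      next
        show "fgraph (\<Union>C)" unfolding fgraph_def
        proof (intro allI impI)
          fix x a b assume "(x,a) \<in> \<Union>C" "(x,b) \<in> \<Union>C"
          then obtain X Y where "(x,a) \<in> X" "(x,b) \<in> Y" "X \<in> C" "Y \<in> C" by blast
          then obtain Z where "(x,a) \<in> Z" "(x,b) \<in> Z" "Z \<in> C" using ch by blast
          thus "a = b" using CA unfolding AA_def fgraph_def by blast
        qed
      next
        show "domp p (\<Union>C)" using CA unfolding AA_def domp_def by blast
      next
        obtain X where "X \<in> C" using False by blast
        thus "G0 \<subseteq> \<Union>C" using CA unfolding AA_def by blast
      qed
      thus ?thesis by blast
    qed
  qed
  then obtain M where MA: "M \<in> AA" and Mmax: "\<forall>X\<in>AA. M \<subseteq> X \<longrightarrow> X = M"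
    using Zorn_Lemma2[of AA] by blast
  have Msub: "subspace M" and Mfg: "fgraph M" and Mdp: "domp p M" and G0M: "G0 \<subseteq> M"
    using MA unfolding AA_def by auto
  have full: "x \<in> fst ` M" for x
  proof (rule ccontr)
    assume "x \<notin> fst ` M"
    from hb_step[OF sl Msub Mfg Mdp this] obtain G' where
      "subspace G'" "fgraph G'" "domp p G'" "M \<subseteq> G'" "x \<in> fst ` G'" .
    moreover hence "G' \<in> AA" using G0M unfolding AA_def by blast
    ultimately have "G' = M" using Mmax by blast
    with \<open>x \<in> fst ` G'\<close> \<open>x \<notin> fst ` M\<close> show False by simp
  qed
  define F where "F x = (THE a. (x,a) \<in> M)" for x
  have Fin: "(x, F x) \<in> M" for x
  proof -
    obtain a where a: "(x,a) \<in> M" using full[of x] by force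
    hence "F x = a" unfolding F_def using Mfg unfolding fgraph_def by blast
    thus ?thesis using a by simp
  qed
  have Feq: "F x = a" if "(x,a) \<in> M" for x a
    using Fin[of x] that Mfg unfolding fgraph_def by blast
  have "linear F"
  proof (rule linearI)
    fix x y
    show "F (x + y) = F x + F y"
      using subspace_add[OF Msub Fin[of x] Fin[of y]] by (intro Feq) simp
  next
    fix r x
    show "F (r *\<^sub>R x) = r *\<^sub>R F x"
      using subspace_scale[OF Msub Fin[of x], of r] by (simp add: Feq)
  qed
  moreover have "F x \<le> p x" for x using Mdp Fin[of x] unfolding domp_def by blast
  moreover have "F y0 = p y0"
    using G0M unfolding G0_def by (intro Feq) (force intro: image_eqI[of _ _ 1])
  ultimately show ?thesis using that by blast
qed


definition gaugeV :: "'a::real_normed_vector set \<Rightarrow> 'a \<Rightarrow> real" where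
  "gaugeV V x = Inf {t. 0 < t \<and> inverse t *\<^sub>R x \<in> V}"

locale gctx =
  fixes V :: "'a::real_normed_vector set" and r :: real
  assumes cv: "convex V" and r: "r > 0" and bl: "ball 0 r \<subseteq> V"
begin

definition "T x = {t. 0 < t \<and> inverse t *\<^sub>R x \<in> V}"

lemma big_in: assumes "t > norm x / r" shows "t \<in> T x"
proof -
  have t: "t > 0" using assms r by (smt (verit) divide_nonneg_pos norm_ge_zero)
  have "norm x < t * r" using assms r by (simp add: field_simps)
  hence "norm (inverse t *\<^sub>R x) < r" using t by (simp add: field_simps)
  thus ?thesis using bl t unfolding T_def by auto
qed

lemma T_ne: "T x \<noteq> {}" using big_in[where t="norm x / r + 1" and x=x] by auto

lemma T_bdd: "bdd_below (T x)" unfolding T_def bdd_below_def by (auto intro: less_imp_le)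

lemma g_eq: "gaugeV V x = Inf (T x)" unfolding gaugeV_def T_def ..

lemma g_nonneg: "0 \<le> gaugeV V x"
  unfolding g_eq using T_ne by (intro cInf_greatest) (auto simp: T_def)

lemma g_le: "t \<in> T x \<Longrightarrow> gaugeV V x \<le> t"
  unfolding g_eq using T_bdd by (intro cInf_lower)

lemma g_norm: "gaugeV V x \<le> norm x / r"
  by (rule dense_ge) (auto intro: g_le big_in)

lemma zeroV: "0 \<in> V" using bl r by auto

lemma T_up: assumes "t \<in> T x" "t \<le> s" shows "s \<in> T x"
proof -
  have t: "t > 0" "inverse t *\<^sub>R x \<in> V" using assms unfolding T_def by auto
  have s: "s > 0" using t assms by simp
  have "(t / s) *\<^sub>R (inverse t *\<^sub>R x) + (1 - t / s) *\<^sub>R 0 \<in> V"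
    using t s assms by (intro convexD[OF cv _ zeroV]) (auto simp: field_simps)
  moreover have "(t / s) *\<^sub>R (inverse t *\<^sub>R x) + (1 - t / s) *\<^sub>R (0::'a) = ((t / s) * inverse t) *\<^sub>R x"
    by simp
  moreover have "(t / s) * inverse t = inverse s" using t by (simp add: field_simps)
  ultimately show ?thesis using s unfolding T_def by simp
qed

lemma g_less: assumes "gaugeV V x < s" shows "s \<in> T x"
proof -
  obtain t where "t \<in> T x" "t < s" using cInf_lessD[OF T_ne assms[unfolded g_eq]] by blast
  thus ?thesis using T_up by auto
qed

lemma sublin_g: "sublin (gaugeV V)"
  unfolding sublin_def
proof (intro conjI allI impI)
  fix x y
  show "gaugeV V (x + y) \<le> gaugeV V x + gaugeV V y"
  proof (rule dense_ge)
    fix s assume s: "gaugeV V x + gaugeV V y < s"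
    define e where "e = (s - gaugeV V x - gaugeV V y) / 2"
    have e: "e > 0" using s e_def by simp
    define s1 where "s1 = gaugeV V x + e"
    define s2 where "s2 = gaugeV V y + e"
    have "s1 \<in> T x" "s2 \<in> T y" using e s1_def s2_def by (auto intro: g_less)
    hence 1: "s1 > 0" "inverse s1 *\<^sub>R x \<in> V" "s2 > 0" "inverse s2 *\<^sub>R y \<in> V" unfolding T_def by auto
    have ss: "s = s1 + s2" using e_def s1_def s2_def by simp
    have "(s1 / s) *\<^sub>R (inverse s1 *\<^sub>R x) + (s2 / s) *\<^sub>R (inverse s2 *\<^sub>R y) \<in> V"
      using 1 ss by (intro convexD[OF cv]) (auto simp: add_divide_distrib[symmetric])
    moreover have "(s1 / s) *\<^sub>R (inverse s1 *\<^sub>R x) + (s2 / s) *\<^sub>R (inverse s2 *\<^sub>R y) = ((s1 / s) * inverse s1) *\<^sub>R x + ((s2 / s) * inverse s2) *\<^sub>R y"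
      by simp
    moreover have "(s1 / s) * inverse s1 = inverse s" "(s2 / s) * inverse s2 = inverse s"
      using 1 ss by (simp_all add: field_simps)
    moreover have "inverse s *\<^sub>R x + inverse s *\<^sub>R y = inverse s *\<^sub>R (x + y)"
      by (simp add: scaleR_add_right)
    ultimately have "s \<in> T (x + y)" using 1 ss unfolding T_def by simp
    thus "gaugeV V (x + y) \<le> s" by (rule g_le)
  qed
next
  fix x and t :: real assume t: "0 < t"
  show "gaugeV V (t *\<^sub>R x) \<le> t * gaugeV V x"
  proof (rule dense_ge)
    fix s assume s: "t * gaugeV V x < s"
    hence "gaugeV V x < s / t" using t by (simp add: field_simps)
    hence "s / t \<in> T x" by (rule g_less)
    hence s0: "s / t > 0" and m: "inverse (s / t) *\<^sub>R x \<in> V" unfolding T_def by auto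
    have "s > 0" using s0 t by (simp add: zero_less_divide_iff)
    have E: "inverse (s / t) *\<^sub>R x = inverse s *\<^sub>R (t *\<^sub>R x)" using t by (simp add: divide_inverse_commute)
    have "inverse s *\<^sub>R (t *\<^sub>R x) \<in> V" using m unfolding E .
    hence "s \<in> T (t *\<^sub>R x)" using \<open>s > 0\<close> unfolding T_def by blast
    thus "gaugeV V (t *\<^sub>R x) \<le> s" by (rule g_le)
  qed
qed

lemma g_out: assumes "x \<notin> V" shows "1 \<le> gaugeV V x"
proof (rule ccontr)
  assume "\<not> 1 \<le> gaugeV V x"
  hence "1 \<in> T x" by (intro g_less) simp
  thus False using assms unfolding T_def by simp
qed

lemma g_in: assumes "open V" "x \<in> V" shows "gaugeV V x < 1"
proof (cases "x = 0")
  case True thus ?thesis using g_norm[of x] r by simp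
next
  case False
  obtain e where e: "e > 0" "ball x e \<subseteq> V" using assms openE by blast
  define l where "l = 1 + e / (2 * norm x)"
  have l: "l > 1" using e False l_def by simp
  have "x - l *\<^sub>R x = (1 - l) *\<^sub>R x" by (simp add: algebra_simps)
  hence "dist x (l *\<^sub>R x) = (l - 1) * norm x"
    using l by (simp add: dist_norm)
  also have "\<dots> = e / 2" using False l_def by simp
  finally have "l *\<^sub>R x \<in> V" using e by auto
  hence "inverse l \<in> T x" using l unfolding T_def by simp
  hence "gaugeV V x \<le> inverse l" by (rule g_le)
  also have "\<dots> < 1" using l by (simp add: inverse_less_1_iff)
  finally show ?thesis .
qed

end

lemma sep_open_point:
  fixes U :: "'a::real_normed_vector set"
  assumes "open U" "convex U" "u0 \<in> U" "x0 \<notin> U"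
  obtains f :: "'a \<Rightarrow>\<^sub>L real" where "\<And>u. u \<in> U \<Longrightarrow> f u < f x0"
proof -
  define V where "V = (+) (- u0) ` U"
  have oV: "open V" unfolding V_def by (rule open_translation[OF assms(1)])
  have cV: "convex V" unfolding V_def by (rule convex_translation[OF assms(2)])
  have "0 \<in> V" unfolding V_def using assms(3) by force
  then obtain r where r: "r > 0" "ball 0 r \<subseteq> V" using oV openE by blast
  interpret gctx V r using cV r by unfold_locales
  obtain F where F: "linear F" "\<And>x. F x \<le> gaugeV V x" "F (x0 - u0) = gaugeV V (x0 - u0)"
    using hahn_banach[OF sublin_g] by blast
  have Fb: "norm (F x) \<le> norm x * inverse r" for x
  proof -
    have "F x \<le> norm x / r" using F(2)[of x] g_norm[of x] by simp
    moreover have "- F x \<le> norm x / r" using F(2)[of "-x"] g_norm[of "-x"] linear_neg[OF F(1)] by simp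
    ultimately show ?thesis by (simp add: field_simps abs_le_iff)
  qed
  have bl: "bounded_linear F"
    using F(1) Fb by (intro bounded_linear_intro[of F "inverse r"]) (auto simp: linear_add linear_scale)
  have "x0 - u0 \<notin> V" using assms(4) unfolding V_def by force
  hence F1: "1 \<le> F (x0 - u0)" using F(3) g_out by simp
  show ?thesis
  proof (rule that[of "Blinfun F"])
    fix u assume "u \<in> U"
    hence "u - u0 \<in> V" unfolding V_def by force
    hence "F (u - u0) < 1" using F(2) g_in[OF oV] by (meson le_less_trans)
    hence "F (u - u0) < F (x0 - u0)" using F1 by simp
    thus "Blinfun F u < Blinfun F x0" using bl by (simp add: bounded_linear_Blinfun_apply linear_diff[OF F(1)])
  qed
qed

lemma sep_closed_point:
  fixes A :: "'a::real_normed_vector set"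
  assumes "closed A" "convex A" "A \<noteq> {}" "y \<notin> A"
  obtains f :: "'a \<Rightarrow>\<^sub>L real" and \<delta> where "\<delta> > 0" "\<And>a. a \<in> A \<Longrightarrow> f a + \<delta> \<le> f y"
proof -
  obtain d where d: "d > 0" "ball y d \<subseteq> - A"
    using assms(1,4) open_Compl[OF assms(1)] openE by (metis ComplI)
  define U where "U = (\<Union>x\<in>A. \<Union>w\<in>ball 0 d. {x + w})"
  have oU: "open U" unfolding U_def by (rule open_sums) simp
  have cU: "convex U" unfolding U_def by (rule convex_sums[OF assms(2) convex_ball])
  obtain a0 where a0: "a0 \<in> A" using assms(3) by blast
  have u0: "a0 + 0 \<in> U" unfolding U_def using a0 d by force
  have yU: "y \<notin> U"
  proof
    assume "y \<in> U"
    then obtain x w where "x \<in> A" "norm w < d" "y = x + w" unfolding U_def by auto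
    hence "x \<in> ball y d" by (simp add: dist_norm)
    thus False using d \<open>x \<in> A\<close> by blast
  qed
  obtain f :: "'a \<Rightarrow>\<^sub>L real" where f: "\<And>u. u \<in> U \<Longrightarrow> f u < f y"
    using sep_open_point[OF oU cU u0 yU] by blast
  have "f \<noteq> 0" using f[OF u0] by auto
  then obtain e where e: "f e \<noteq> 0" by (metis blinfun_eqI zero_blinfun.rep_eq)
  define e' where "e' = (if f e > 0 then e else - e)"
  have e': "f e' > 0" using e unfolding e'_def by (auto simp: blinfun.minus_right)
  hence ne: "e' \<noteq> 0" by auto
  define w where "w = (d / 2 / norm e') *\<^sub>R e'"
  have nw: "norm w = d / 2" using ne d unfolding w_def by simp
  have fw: "f w > 0" using e' ne d unfolding w_def by (simp add: blinfun.scaleR_right)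
  show ?thesis
  proof (rule that[OF fw])
    fix a assume "a \<in> A"
    hence "a + w \<in> U" unfolding U_def using nw d by force
    hence "f (a + w) < f y" by (rule f)
    thus "f a + f w \<le> f y" by (simp add: blinfun.add_right)
  qed
qed


lemma wstar_sot: "wstar_topology = strong_operator_topology"
  unfolding wstar_topology_def strong_operator_topology_def ..

lemma topspace_wstar [simp]: "topspace wstar_topology = UNIV"
  by (simp add: wstar_sot strong_operator_topology_topspace)

lemma cont_apply: "continuous_map wstar_topology euclidean (blinfun_apply :: ('a::real_normed_vector \<Rightarrow>\<^sub>L real) \<Rightarrow> _)"
  using continuous_map_pullback[of euclidean euclidean id UNIV "blinfun_apply :: ('a \<Rightarrow>\<^sub>L real) \<Rightarrow> _"]
  unfolding wstar_topology_def by simp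

lemma closedin_wstar_ge:
  "closedin wstar_topology {f :: 'a::real_normed_vector \<Rightarrow>\<^sub>L real. c \<le> blinfun_apply f v}"
proof -
  have "closedin wstar_topology {f \<in> topspace wstar_topology. blinfun_apply f \<in> {g :: 'a \<Rightarrow> real. c \<le> g v}}"
    by (rule closedin_continuous_map_preimage[OF cont_apply])
       (simp add: closed_Collect_le continuous_on_const)
  thus ?thesis by simp
qed

definition LL :: "('a::real_normed_vector \<Rightarrow> real) set" where
  "LL = {g. (\<forall>x. \<bar>g x\<bar> \<le> norm x) \<and> (\<forall>x y. g (x + y) = g x + g y) \<and> (\<forall>c x. g (c *\<^sub>R x) = c * g x)}"

lemma closed_LL: "closed LL"
proof -
  have c1: "closed {g :: 'a \<Rightarrow> real. \<forall>x. \<bar>g x\<bar> \<le> norm x}"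
    by (intro closed_Collect_all closed_Collect_le continuous_intros) simp_all
  have c2: "closed {g :: 'a \<Rightarrow> real. \<forall>x y. g (x + y) = g x + g y}"
    by (intro closed_Collect_all closed_Collect_eq continuous_intros) simp_all
  have c3: "closed {g :: 'a \<Rightarrow> real. \<forall>c x. g (c *\<^sub>R x) = c * g x}"
    by (intro closed_Collect_all closed_Collect_eq continuous_intros) simp_all
  have eq: "LL = {g :: 'a \<Rightarrow> real. \<forall>x. \<bar>g x\<bar> \<le> norm x} \<inter> {g. \<forall>x y. g (x + y) = g x + g y} \<inter> {g. \<forall>c x. g (c *\<^sub>R x) = c * g x}"
    unfolding LL_def by blast
  show ?thesis unfolding eq using c1 c2 c3 by (intro closed_Int)
qed

lemma compact_LL: "compact (LL :: ('a::real_normed_vector \<Rightarrow> real) set)"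
proof -
  have "compactin (product_topology (\<lambda>_. euclidean) UNIV) (PiE UNIV (\<lambda>x::'a. {- norm x .. norm x}))"
    by (subst compactin_PiE) simp
  hence "compact (PiE UNIV (\<lambda>x::'a. {- norm x .. norm x}))"
    by (simp add: euclidean_product_topology)
  moreover have "LL \<subseteq> PiE UNIV (\<lambda>x::'a. {- norm x .. norm x})"
  proof
    fix g :: "'a \<Rightarrow> real" assume "g \<in> LL"
    hence "\<bar>g x\<bar> \<le> norm x" for x unfolding LL_def by blast
    hence "g x \<in> {- norm x .. norm x}" for x by (simp add: abs_le_iff) (smt (verit) \<open>\<And>x. \<bar>g x\<bar> \<le> norm x\<close>)
    thus "g \<in> PiE UNIV (\<lambda>x::'a. {- norm x .. norm x})" unfolding PiE_UNIV_domain by blast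
  qed
  ultimately show ?thesis using closed_LL
    by (metis compact_Int_closed inf.absorb_iff2)
qed

lemma ball_eq_LL: "{f :: 'a::real_normed_vector \<Rightarrow>\<^sub>L real. norm f \<le> 1} = Blinfun ` LL"
proof (intro equalityI subsetI)
  fix f :: "'a \<Rightarrow>\<^sub>L real" assume "f \<in> {f. norm f \<le> 1}"
  hence n: "norm f \<le> 1" by simp
  have "\<bar>f x\<bar> \<le> norm x" for x
  proof -
    have "norm f * norm x \<le> 1 * norm x" using n by (intro mult_right_mono) simp_all
    thus ?thesis using norm_blinfun[of f x] by simp
  qed
  hence "blinfun_apply f \<in> LL" unfolding LL_def
    by (auto simp: blinfun.add_right blinfun.scaleR_right)
  thus "f \<in> Blinfun ` LL" by (intro image_eqI[of _ _ "blinfun_apply f"]) (simp_all add: blinfun_apply_inverse)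
next
  fix f assume "f \<in> Blinfun ` LL"
  then obtain g where g: "g \<in> LL" "f = Blinfun g" by blast
  have bl: "bounded_linear g"
    using g(1) unfolding LL_def by (intro bounded_linear_intro[of g 1]) auto
  show "f \<in> {f. norm f \<le> 1}"
    using g(1) unfolding g(2) LL_def
    by (auto intro!: norm_blinfun_bound simp: bounded_linear_Blinfun_apply[OF bl])
qed

lemma compact_ball_wstar:
  "compactin wstar_topology {f :: 'a::real_normed_vector \<Rightarrow>\<^sub>L real. norm f \<le> 1}"
proof -
  have "continuous_map (subtopology euclidean LL) wstar_topology (Blinfun :: ('a \<Rightarrow> real) \<Rightarrow> _)"
    unfolding wstar_topology_def
  proof (rule continuous_map_pullback')
    have "continuous_map (subtopology euclidean (LL :: ('a \<Rightarrow> real) set)) euclidean id"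
      by (simp add: continuous_map_from_subtopology)
    moreover have "id g = (blinfun_apply \<circ> Blinfun) g" if "g \<in> topspace (subtopology euclidean (LL :: ('a \<Rightarrow> real) set))" for g
    proof -
      have "g \<in> LL" using that by simp
      hence "bounded_linear g" unfolding LL_def by (intro bounded_linear_intro[of g 1]) auto
      thus ?thesis by (simp add: bounded_linear_Blinfun_apply)
    qed
    ultimately show "continuous_map (subtopology euclidean LL) euclidean (blinfun_apply \<circ> (Blinfun :: ('a \<Rightarrow> real) \<Rightarrow> _))"
      by (rule continuous_map_eq)
  qed simp
  moreover have "compactin (subtopology euclidean LL) (LL :: ('a \<Rightarrow> real) set)"
    by (simp add: compactin_subtopology compact_LL)
  ultimately show ?thesis unfolding ball_eq_LL by (rule image_compactin[rotated])
qed

lemma closedin_ball_wstar: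
  "closedin wstar_topology {f :: 'a::real_normed_vector \<Rightarrow>\<^sub>L real. norm f \<le> 1}"
proof -
  have "closedin wstar_topology {f \<in> topspace wstar_topology. blinfun_apply f \<in> LL}"
    by (rule closedin_continuous_map_preimage[OF cont_apply]) (simp add: closed_LL)
  moreover have "{f \<in> topspace wstar_topology. blinfun_apply f \<in> LL} = {f :: 'a \<Rightarrow>\<^sub>L real. norm f \<le> 1}"
  proof -
    have "blinfun_apply f \<in> LL \<longleftrightarrow> f \<in> Blinfun ` LL" for f :: "'a \<Rightarrow>\<^sub>L real"
    proof
      assume "blinfun_apply f \<in> LL" thus "f \<in> Blinfun ` LL"
        by (intro image_eqI[of _ _ "blinfun_apply f"]) (simp_all add: blinfun_apply_inverse)
    next
      assume "f \<in> Blinfun ` LL"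
      then obtain g where g: "g \<in> LL" "f = Blinfun g" by blast
      have bl: "bounded_linear g"
        using g(1) unfolding LL_def by (intro bounded_linear_intro[of g 1]) auto
      thus "blinfun_apply f \<in> LL" using g by (simp add: bounded_linear_Blinfun_apply)
    qed
    thus ?thesis unfolding ball_eq_LL by auto
  qed
  ultimately show ?thesis by metis
qed

lemma cch_compact:
  fixes S :: "('a::real_normed_vector \<Rightarrow>\<^sub>L real) set"
  assumes "\<And>f. f \<in> S \<Longrightarrow> norm f \<le> 1"
  shows "compactin wstar_topology (wstar_cch S)"
proof -
  have cv: "convex {f :: 'a \<Rightarrow>\<^sub>L real. norm f \<le> 1}"
    using convex_cball[of "0 :: 'a \<Rightarrow>\<^sub>L real" 1] by (simp add: cball_def dist_norm)
  have "convex hull S \<subseteq> {f. norm f \<le> 1}" by (rule hull_minimal) (use assms cv in auto)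
  hence "wstar_cch S \<subseteq> {f. norm f \<le> 1}" unfolding wstar_cch_def
    by (rule closure_of_minimal[OF _ closedin_ball_wstar])
  thus ?thesis unfolding wstar_cch_def
    by (rule closed_compactin[OF compact_ball_wstar[unfolded wstar_cch_def]]) simp
qed

lemma zero_notin_cch:
  fixes S :: "('a::real_normed_vector \<Rightarrow>\<^sub>L real) set"
  assumes "c > 0" "\<And>f. f \<in> S \<Longrightarrow> c \<le> blinfun_apply f v"
  shows "0 \<notin> wstar_cch S"
proof -
  have cv: "convex {f :: 'a \<Rightarrow>\<^sub>L real. c \<le> blinfun_apply f v}"
    unfolding convex_def
  proof (intro ballI allI impI, goal_cases)
    case (1 x y u w)
    have "c = (u + w) * c" using 1 by simp
    also have "\<dots> = u * c + w * c" by (simp add: distrib_right)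
    also have "\<dots> \<le> u * x v + w * y v" using 1 by (intro add_mono mult_left_mono) auto
    finally show ?case by (simp add: blinfun.add_left blinfun.scaleR_left)
  qed
  have "convex hull S \<subseteq> {f. c \<le> blinfun_apply f v}" by (rule hull_minimal) (use assms cv in auto)
  hence "wstar_cch S \<subseteq> {f. c \<le> blinfun_apply f v}" unfolding wstar_cch_def
    by (rule closure_of_minimal[OF _ closedin_wstar_ge])
  thus ?thesis using assms(1) by auto
qed


lemma mem_neg_bar: "f \<in> uminus ` bar A \<longleftrightarrow> bdd_below (blinfun_apply f ` A)"
proof -
  have "f \<in> uminus ` bar A \<longleftrightarrow> - f \<in> bar A" by (force simp: image_iff)
  also have "\<dots> \<longleftrightarrow> bdd_above ((\<lambda>x. - blinfun_apply f x) ` A)"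
  proof -
    have "blinfun_apply (-f) = (\<lambda>x. - blinfun_apply f x)" by (rule ext) (simp add: blinfun.minus_left)
    thus ?thesis unfolding bar_def by simp
  qed
  also have "\<dots> \<longleftrightarrow> bdd_below (blinfun_apply f ` A)" by (rule bdd_above_uminus_image)
  finally show ?thesis .
qed

definition phi :: "'a::real_normed_vector set \<Rightarrow> ('a \<Rightarrow>\<^sub>L real) \<Rightarrow> 'a \<Rightarrow> real" where
  "phi A f = (\<lambda>y. blinfun_apply f y - (INF x\<in>A. blinfun_apply f x))"

definition DD :: "('a::real_normed_vector \<Rightarrow> real) \<Rightarrow> ('a \<Rightarrow>\<^sub>L real)" where
  "DD \<phi> = Blinfun (\<lambda>y. \<phi> y - \<phi> 0)"

lemma Cfam_eq: "Cfam A = phi A ` (dual_sphere \<inter> uminus ` bar A)"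
  unfolding Cfam_def phi_def by auto

lemma DD_phi [simp]: "DD (phi A f) = f"
  unfolding DD_def phi_def by (simp add: blinfun.zero_right blinfun_apply_inverse)

lemma phi_diff: "phi A f a - phi A f b = blinfun_apply f (a - b)"
  unfolding phi_def by (simp add: blinfun.diff_right)

lemma phi_step: "phi A f (y + t *\<^sub>R v) - phi A f y = t * blinfun_apply f v"
  unfolding phi_def by (simp add: blinfun.add_right blinfun.scaleR_right)

lemma DD_img: "DD ` Cfam A = dual_sphere \<inter> uminus ` bar A"
  unfolding Cfam_eq image_image by simp

lemma sphere_norm: "f \<in> dual_sphere \<Longrightarrow> norm f = 1"
  unfolding dual_sphere_def by simp

lemma main_lemma:
  fixes A :: "'a::real_normed_vector set"
  assumes ne: "A \<noteq> {}" and cl: "closed A" and cv: "convex A" and bar: "bar A \<noteq> {0}"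
  shows "(\<forall>y\<in>A. weak_admissible A y (Cfam A))
    \<and> (0 \<notin> wstar_cch (dual_sphere \<inter> uminus ` bar A) \<longrightarrow> (\<forall>y\<in>A. admissible A y (Cfam A)))"
proof -
  define S where "S = dual_sphere \<inter> uminus ` bar A"
  have Sne: "S \<noteq> {}"
  proof -
    have "0 \<in> bar A" unfolding bar_def by (auto simp: bdd_above_def)
    then obtain g where g: "g \<in> bar A" "g \<noteq> 0" using bar by blast
    define n where "n = norm g"
    have n: "n > 0" using g n_def by simp
    define f where "f = - (inverse n *\<^sub>R g)"
    have "norm f = 1" using n n_def unfolding f_def by simp
    moreover have "bdd_below (blinfun_apply f ` A)"
    proof -
      obtain M where M: "\<And>x. x \<in> A \<Longrightarrow> g x \<le> M" using g(1) unfolding bar_def bdd_above_def by auto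
      have "- (inverse n * M) \<le> f x" if "x \<in> A" for x
        using M[OF that] n unfolding f_def by (simp add: blinfun.minus_left blinfun.scaleR_left mult_left_mono divide_right_mono)
      thus ?thesis unfolding bdd_below_def by blast
    qed
    ultimately have "f \<in> S" unfolding S_def dual_sphere_def using mem_neg_bar by blast
    thus ?thesis by blast
  qed
  have Sbdd: "bdd_below (blinfun_apply f ` A)" if "f \<in> S" for f
    using that unfolding S_def by (simp add: mem_neg_bar)
  have Snorm: "norm f = 1" if "f \<in> S" for f using that unfolding S_def dual_sphere_def by simp
  have CS: "Cfam A = phi A ` S" unfolding Cfam_eq S_def ..
  have DS: "DD ` Cfam A = S" unfolding DD_img S_def ..
  have Cne: "Cfam A \<noteq> {}" using Sne CS by simp
  have nonneg: "A = nonneg_set (Cfam A)"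
  proof (intro equalityI subsetI)
    fix y assume y: "y \<in> A"
    show "y \<in> nonneg_set (Cfam A)" unfolding nonneg_set_def CS
    proof (intro CollectI ballI)
      fix \<phi> assume "\<phi> \<in> phi A ` S"
      then obtain f where f: "f \<in> S" "\<phi> = phi A f" by blast
      have "(INF x\<in>A. blinfun_apply f x) \<le> f y" by (rule cINF_lower[OF Sbdd[OF f(1)] y])
      thus "0 \<le> \<phi> y" unfolding f(2) phi_def by simp
    qed
  next
    fix y assume y: "y \<in> nonneg_set (Cfam A)"
    show "y \<in> A"
    proof (rule ccontr)
      assume "y \<notin> A"
      from sep_closed_point[OF cl cv ne this] obtain g :: "'a \<Rightarrow>\<^sub>L real" and \<delta>
        where gd: "\<delta> > 0" "\<And>a. a \<in> A \<Longrightarrow> g a + \<delta> \<le> g y" by blast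
      obtain a0 where a0: "a0 \<in> A" using ne by blast
      have "g \<noteq> 0" using gd(2)[OF a0] gd(1) by auto
      define n where "n = norm g"
      have n: "n > 0" using \<open>g \<noteq> 0\<close> n_def by simp
      define f where "f = - (inverse n *\<^sub>R g)"
      have fn: "norm f = 1" using n n_def unfolding f_def by simp
      have fa: "f y + inverse n * \<delta> \<le> f a" if "a \<in> A" for a
      proof -
        have "inverse n * (g a + \<delta>) \<le> inverse n * g y" using gd(2)[OF that] n by (simp add: mult_left_mono)
        thus ?thesis unfolding f_def by (simp add: blinfun.minus_left blinfun.scaleR_left algebra_simps divide_inverse)
      qed
      hence fb: "bdd_below (blinfun_apply f ` A)" unfolding bdd_below_def by blast
      hence fS: "f \<in> S" unfolding S_def dual_sphere_def using fn mem_neg_bar by blast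
      have "f y + inverse n * \<delta> \<le> (INF x\<in>A. blinfun_apply f x)"
        using ne fa by (intro cINF_greatest) auto
      moreover have "0 < inverse n * \<delta>" using n gd(1) by simp
      ultimately have "phi A f y < 0" unfolding phi_def by simp
      moreover have "phi A f \<in> Cfam A" unfolding CS using fS by (rule imageI)
      moreover have "\<forall>\<psi>\<in>Cfam A. 0 \<le> \<psi> y" using y unfolding nonneg_set_def by blast
      ultimately show False by fastforce
    qed
  qed
  have eg: "equi_gateaux (Cfam A) y DD" for y
    unfolding equi_gateaux_def
  proof (intro conjI ballI allI impI)
    fix \<phi> assume "\<phi> \<in> Cfam A"
    hence "\<phi> \<in> phi A ` S" by (simp only: CS)
    then obtain f where f: "\<phi> = phi A f" by (rule imageE)
    show "gateaux_diff \<phi> y (DD \<phi>)" unfolding gateaux_diff_def f DD_phi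
    proof
      fix v
      have "eventually (\<lambda>t. t \<noteq> 0) (at_right (0::real))" by (simp add: eventually_at_filter)
      hence "eventually (\<lambda>t. blinfun_apply f v = (phi A f (y + t *\<^sub>R v) - phi A f y) / t) (at_right 0)"
        by eventually_elim (simp add: phi_step)
      thus "((\<lambda>t. (phi A f (y + t *\<^sub>R v) - phi A f y) / t) \<longlongrightarrow> blinfun_apply f v) (at_right 0)"
        by (rule Lim_transform_eventually[OF tendsto_const])
    qed
  next
    fix v and \<epsilon> :: real assume e: "\<epsilon> > 0"
    have "\<forall>\<phi>\<in>Cfam A. \<bar>(\<phi> (y + t *\<^sub>R v) - \<phi> y - t * blinfun_apply (DD \<phi>) v) / t\<bar> \<le> \<epsilon>" for t
    proof
      fix \<phi> assume "\<phi> \<in> Cfam A"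
      hence "\<phi> \<in> phi A ` S" by (simp only: CS)
      then obtain f where f: "\<phi> = phi A f" by (rule imageE)
      show "\<bar>(\<phi> (y + t *\<^sub>R v) - \<phi> y - t * blinfun_apply (DD \<phi>) v) / t\<bar> \<le> \<epsilon>"
        unfolding f DD_phi phi_step using e by simp
    qed
    thus "eventually (\<lambda>t. \<forall>\<phi>\<in>Cfam A. \<bar>(\<phi> (y + t *\<^sub>R v) - \<phi> y - t * blinfun_apply (DD \<phi>) v) / t\<bar> \<le> \<epsilon>) (at_right 0)"
      by simp
  qed
  have lsc: "equi_lsc C y" if "C \<subseteq> Cfam A" for C y
    unfolding equi_lsc_def
  proof (intro allI impI)
    fix \<epsilon> :: real assume e: "\<epsilon> > 0"
    show "\<exists>U. open U \<and> y \<in> U \<and> (\<forall>z\<in>U. \<forall>\<phi>\<in>C. \<phi> z - \<phi> y > - \<epsilon>)"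
    proof (intro exI conjI ballI)
      fix z \<phi> assume z: "z \<in> ball y \<epsilon>" and "\<phi> \<in> C"
      hence "\<phi> \<in> phi A ` S" using that by (simp only: CS) blast
      then obtain f where f: "f \<in> S" "\<phi> = phi A f" by (rule imageE)
      have "\<bar>f (z - y)\<bar> \<le> norm (z - y)" using norm_blinfun[of f "z - y"] Snorm[OF f(1)] by simp
      moreover have "norm (z - y) < \<epsilon>" using z by (simp add: dist_norm norm_minus_commute)
      ultimately show "\<phi> z - \<phi> y > - \<epsilon>" unfolding f(2) phi_diff by linarith
    qed (use e in auto)
  qed
  have comp: "compactin wstar_topology (wstar_cch (DD ` Cfam A))"
    unfolding DS by (rule cch_compact) (simp add: Snorm)
  have lip: "equi_lipschitz 1 (Cfam A) y" for y
    unfolding equi_lipschitz_def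
  proof (intro exI[of _ 1] conjI ballI)
    fix \<phi> x z assume "\<phi> \<in> Cfam A"
    hence "\<phi> \<in> phi A ` S" by (simp only: CS)
    then obtain f where f: "f \<in> S" "\<phi> = phi A f" by (rule imageE)
    show "\<bar>\<phi> x - \<phi> z\<bar> \<le> 1 * norm (x - z)"
      unfolding f(2) phi_diff using norm_blinfun[of f "x - z"] Snorm[OF f(1)] by simp
  qed simp
  show ?thesis
  proof (intro conjI ballI impI)
    fix y assume "y \<in> A"
    have l: "equi_lsc {\<phi> \<in> Cfam A. \<phi> y \<noteq> 0} y" by (rule lsc) blast
    show "weak_admissible A y (Cfam A)" unfolding weak_admissible_def
      by (intro conjI exI[of _ DD] disjI2 \<open>y \<in> A\<close> Cne nonneg eg comp l)
  next
    fix y assume 0: "0 \<notin> wstar_cch (dual_sphere \<inter> uminus ` bar A)" and "y \<in> A"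
    have 1: "0 \<notin> wstar_cch (DD ` Cfam A)" using 0 DS unfolding S_def by simp
    show "admissible A y (Cfam A)" unfolding admissible_def
      by (intro conjI exI[of _ DD] exI[of _ 1] \<open>y \<in> A\<close> Cne nonneg eg lip 1 zero_le_one)
  qed
qed


lemma part3:
  fixes B :: "'a::real_normed_vector set"
  assumes cl: "closed B" and cv: "convex B" and nU: "B \<noteq> UNIV"
    and int: "interior (rec_cone B) \<noteq> {}" and y: "y \<in> B"
  shows "admissible B y (Cfam B)"
proof -
  have ne: "B \<noteq> {}" using y by blast
  obtain z where z: "z \<notin> B" using nU by blast
  from sep_closed_point[OF cl cv ne z] obtain g :: "'a \<Rightarrow>\<^sub>L real" and \<delta>
    where gd: "\<delta> > 0" "\<And>a. a \<in> B \<Longrightarrow> g a + \<delta> \<le> g z" by blast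
  have "g a \<le> g z" if "a \<in> B" for a using gd(2)[OF that] gd(1) by linarith
  hence gb: "g \<in> bar B" unfolding bar_def bdd_above_def by blast
  have "g \<noteq> 0" using gd(2)[OF y] gd(1) by auto
  hence bar: "bar B \<noteq> {0}" using gb by blast
  obtain v where v: "v \<in> interior (rec_cone B)" using int by blast
  then obtain e where e: "e > 0" "ball v e \<subseteq> rec_cone B" by (auto simp: mem_interior)
  have key: "e / 2 \<le> blinfun_apply f v" if "f \<in> dual_sphere \<inter> uminus ` bar B" for f
  proof -
    have nf: "norm f = 1" using that unfolding dual_sphere_def by simp
    have bb: "bdd_below (blinfun_apply f ` B)" using that by (simp add: mem_neg_bar)
    obtain m where m: "\<And>a. a \<in> B \<Longrightarrow> m \<le> f a" using bb unfolding bdd_below_def by auto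
    have rc: "0 \<le> f w" if "w \<in> rec_cone B" for w
    proof (rule ccontr)
      assume neg: "\<not> 0 \<le> f w"
      define l where "l = (f y - m + 1) / (- f w)"
      have fy: "m \<le> f y" using m y .
      have l: "l > 0" unfolding l_def using fy neg by (intro divide_pos_pos) auto
      have "y + l *\<^sub>R w \<in> B" using that l y unfolding rec_cone_def by blast
      hence "m \<le> f (y + l *\<^sub>R w)" by (rule m)
      also have "f (y + l *\<^sub>R w) = f y + l * f w" by (simp add: blinfun.add_right blinfun.scaleR_right)
      also have "l * f w = - (f y - m + 1)" unfolding l_def using neg by (simp add: field_simps)
      finally show False by simp
    qed
    have fv: "0 \<le> f v" using rc e by (simp add: subset_iff)
    have bound: "norm (f x) \<le> (2 / e * f v) * norm x" for x
    proof (cases "x = 0")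
      case True thus ?thesis by simp
    next
      case False
      define c where "c = e / (2 * norm x)"
      have c: "c > 0" using e False unfolding c_def by simp
      have "norm (c *\<^sub>R x) = e / 2" using c False e(1) unfolding c_def by simp
      hence "norm (c *\<^sub>R x) < e" using e by simp
      hence "v - c *\<^sub>R x \<in> ball v e" "v + c *\<^sub>R x \<in> ball v e" by (auto simp: dist_norm)
      hence "v - c *\<^sub>R x \<in> rec_cone B" "v + c *\<^sub>R x \<in> rec_cone B" using e(2) by auto
      hence "0 \<le> f (v - c *\<^sub>R x)" "0 \<le> f (v + c *\<^sub>R x)" using rc by auto
      hence "0 \<le> f v - c * f x" "0 \<le> f v + c * f x"
        by (simp_all add: blinfun.diff_right blinfun.add_right blinfun.scaleR_right)
      hence "c * \<bar>f x\<bar> \<le> f v" using c by (cases "f x \<ge> 0") (simp_all add: abs_if)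
      hence "\<bar>f x\<bar> \<le> f v / c" using c by (simp add: field_simps)
      also have "f v / c = (2 / e * f v) * norm x" using e False unfolding c_def by (simp add: field_simps)
      finally show ?thesis by simp
    qed
    have "norm f \<le> 2 / e * f v" by (rule norm_blinfun_bound) (use fv e bound in auto)
    hence "1 \<le> 2 / e * f v" using nf by simp
    thus ?thesis using e by (simp add: field_simps)
  qed
  have "0 \<notin> wstar_cch (dual_sphere \<inter> uminus ` bar B)"
    by (rule zero_notin_cch[of "e / 2" _ v]) (use e key in auto)
  thus ?thesis using main_lemma[OF ne cl cv bar] y by blast
qed

lemma part4:
  fixes B :: "'a::real_normed_vector set"
  assumes cl: "closed B" and cv: "convex B" and co: "cone B" and nU: "B \<noteq> UNIV"
    and int: "interior B \<noteq> {}" and y: "y \<in> B"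
  shows "admissible B y (blinfun_apply ` (dual_sphere \<inter> dual_cone B))"
proof -
  have conec: "c *\<^sub>R x \<in> B" if "x \<in> B" "c \<ge> 0" for x c using co that unfolding cone_def by blast
  have B0: "0 \<in> B" using conec[OF y, of 0] by simp
  have sub: "B \<subseteq> rec_cone B"
    unfolding rec_cone_def
  proof (intro subsetI CollectI allI impI ballI)
    fix v l x assume v: "v \<in> B" and l: "(0::real) < l" and x: "x \<in> B"
    have "l *\<^sub>R v \<in> B" using conec[OF v] l by simp
    hence "(1/2) *\<^sub>R x + (1/2) *\<^sub>R (l *\<^sub>R v) \<in> B" using x by (intro convexD[OF cv]) auto
    hence "2 *\<^sub>R ((1/2) *\<^sub>R x + (1/2) *\<^sub>R (l *\<^sub>R v)) \<in> B" by (rule conec) simp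
    thus "x + l *\<^sub>R v \<in> B" by (simp add: scaleR_add_right)
  qed
  have int': "interior (rec_cone B) \<noteq> {}" using int interior_mono[OF sub] by blast
  have eqS: "uminus ` bar B = dual_cone B"
  proof (intro equalityI subsetI)
    fix f assume "f \<in> uminus ` bar B"
    hence "bdd_below (blinfun_apply f ` B)" by (simp add: mem_neg_bar)
    then obtain m where m: "\<And>a. a \<in> B \<Longrightarrow> m \<le> f a" unfolding bdd_below_def by auto
    show "f \<in> dual_cone B" unfolding dual_cone_def
    proof (intro CollectI ballI)
      fix a assume a: "a \<in> B"
      show "0 \<le> f a"
      proof (rule ccontr)
        assume neg: "\<not> 0 \<le> f a"
        define t where "t = (\<bar>m\<bar> + 1) / (- f a)"
        have t: "t > 0" unfolding t_def using neg by (intro divide_pos_pos) auto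
        have "m \<le> f (t *\<^sub>R a)" using conec[OF a] t m by simp
        also have "f (t *\<^sub>R a) = t * f a" by (simp add: blinfun.scaleR_right)
        also have "t * f a = - (\<bar>m\<bar> + 1)" unfolding t_def using neg by (simp add: field_simps)
        finally show False by simp
      qed
    qed
  next
    fix f assume "f \<in> dual_cone B"
    hence "bdd_below (blinfun_apply f ` B)" unfolding dual_cone_def bdd_below_def by auto
    thus "f \<in> uminus ` bar B" by (simp add: mem_neg_bar)
  qed
  have INF0: "(INF x\<in>B. blinfun_apply f x) = 0" if "f \<in> dual_cone B" for f
  proof (rule antisym)
    have "bdd_below (blinfun_apply f ` B)" using that unfolding dual_cone_def bdd_below_def by auto
    hence "(INF x\<in>B. blinfun_apply f x) \<le> f 0" using B0 by (rule cINF_lower)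
    thus "(INF x\<in>B. blinfun_apply f x) \<le> 0" by (simp add: blinfun.zero_right)
    show "0 \<le> (INF x\<in>B. blinfun_apply f x)"
      using that y unfolding dual_cone_def by (intro cINF_greatest) auto
  qed
  have "Cfam B = blinfun_apply ` (dual_sphere \<inter> dual_cone B)"
    unfolding Cfam_eq eqS phi_def
    by (intro image_cong refl) (simp add: INF0)
  thus ?thesis using part3[OF cl cv nU int' y] by simp
qed

theorem theorem3p7:
  fixes A :: "'a::real_normed_vector set"
  assumes "A \<noteq> {}" and "closed A" and "convex A" and "bar A \<noteq> {0}"
  shows "(\<forall>y\<in>A. weak_admissible A y (Cfam A))
    \<and> (0 \<notin> wstar_cch (dual_sphere \<inter> uminus ` bar A) \<longrightarrow> (\<forall>y\<in>A. admissible A y (Cfam A)))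
    \<and> (\<forall>B :: 'a set. closed B \<and> convex B \<and> B \<noteq> UNIV \<and> interior (rec_cone B) \<noteq> {}
         \<longrightarrow> (\<forall>y\<in>B. admissible B y (Cfam B)))
    \<and> (\<forall>B :: 'a set. closed B \<and> convex B \<and> cone B \<and> B \<noteq> UNIV \<and> interior B \<noteq> {}
         \<longrightarrow> (\<forall>y\<in>B. admissible B y (blinfun_apply ` (dual_sphere \<inter> dual_cone B))))"
proof (intro conjI)
  show "\<forall>y\<in>A. weak_admissible A y (Cfam A)" using main_lemma[OF assms] by (rule conjunct1)
  show "0 \<notin> wstar_cch (dual_sphere \<inter> uminus ` bar A) \<longrightarrow> (\<forall>y\<in>A. admissible A y (Cfam A))"
    using main_lemma[OF assms] by (rule conjunct2)
  show "\<forall>B :: 'a set. closed B \<and> convex B \<and> B \<noteq> UNIV \<and> interior (rec_cone B) \<noteq> {}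
         \<longrightarrow> (\<forall>y\<in>B. admissible B y (Cfam B))"
  proof (intro allI impI ballI)
    fix B :: "'a set" and y
    assume H: "closed B \<and> convex B \<and> B \<noteq> UNIV \<and> interior (rec_cone B) \<noteq> {}" and y: "y \<in> B"
    from H have "closed B" "convex B" "B \<noteq> UNIV" "interior (rec_cone B) \<noteq> {}" by simp_all
    from part3[OF this y] show "admissible B y (Cfam B)" .
  qed
  show "\<forall>B :: 'a set. closed B \<and> convex B \<and> cone B \<and> B \<noteq> UNIV \<and> interior B \<noteq> {}
         \<longrightarrow> (\<forall>y\<in>B. admissible B y (blinfun_apply ` (dual_sphere \<inter> dual_cone B)))"
  proof (intro allI impI ballI)
    fix B :: "'a set" and y
    assume H: "closed B \<and> convex B \<and> cone B \<and> B \<noteq> UNIV \<and> interior B \<noteq> {}" and y: "y \<in> B"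
    from H have "closed B" "convex B" "cone B" "B \<noteq> UNIV" "interior B \<noteq> {}" by simp_all
    from part4[OF this y] show "admissible B y (blinfun_apply ` (dual_sphere \<inter> dual_cone B))" .
  qed
qed

end
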